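(* For every integer $k\ge 3$, let $n=6k^2-5k$. Then there exists a finite simple edge-pancyclic graph of order $n$ with exactly $2n-k$ edges.
   Context: A $k$-cycle is a cycle of length $k$. A graph $G$ of order $n$ is edge-pancyclic if for every integer $m$ with $3\le m\le n$, every edge of $G$ lies in an $m$-cycle. *)

theory Defs
  imports Main
begin

definition simple_graph :: "'a set \<Rightarrow> 'a set set \<Rightarrow> bool" where
  "simple_graph V E \<longleftrightarrow> finite V \<and> (\<forall>e\<in>E. e \<subseteq> V \<and> card e = 2)"

definition is_cycle :: "'a set \<Rightarrow> 'a set set \<Rightarrow> 'a list \<Rightarrow> bool" where
  "is_cycle V E c \<longleftrightarrow> length c \<ge> 3 \<and> distinct c \<and> set c \<subseteq> V \<and>
     (\<forall>i < length c. {c ! i, c ! ((i + 1) mod length c)} \<in> E)"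

definition cycle_edges :: "'a list \<Rightarrow> 'a set set" where
  "cycle_edges c = {{c ! i, c ! ((i + 1) mod length c)} | i. i < length c}"

definition edge_pancyclic :: "'a set \<Rightarrow> 'a set set \<Rightarrow> bool" where
  "edge_pancyclic V E \<longleftrightarrow>
     (\<forall>m. 3 \<le> m \<and> m \<le> card V \<longrightarrow>
        (\<forall>e\<in>E. \<exists>c. is_cycle V E c \<and> length c = m \<and> e \<in> cycle_edges c))"

end

theory Submission
  imports Defs
begin

locale G =
  fixes k p U n :: nat
  assumes k3: "3 \<le> k" and pdef: "p = 3*k - 3" and Udef: "U = 2*p+1" and ndef: "n = k*U"
begin

lemma p6: "6 \<le> p" using k3 pdef by simp
lemma Upos: "0 < U" using Udef by simp
lemma nU: "3*U \<le> n" using k3 ndef by simp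
lemma npos: "0 < n" using nU Upos by simp
lemma kp: "p + 3 = 3*k" using pdef k3 by simp

definition gam :: "nat \<Rightarrow> nat \<Rightarrow> bool" where
 "gam a b \<longleftrightarrow> b = Suc a \<or> (\<exists>i j. j < p \<and> a = i*U+p+1 \<and> b = i*U+j)
     \<or> (\<exists>i j. j < p \<and> a = i*U+p \<and> b = i*U+p+2+j)"

definition gadj where "gadj a b \<longleftrightarrow> gam a b \<or> gam b a"

lemma gadj_sym: "gadj a b \<Longrightarrow> gadj b a" unfolding gadj_def by blast

lemma gadj_ring: "gadj x (Suc x)" "gadj (Suc x) x" unfolding gadj_def gam_def by auto

lemma gadj_A: "j < p \<Longrightarrow> gadj (i*U+p+1) (i*U+j)" "j < p \<Longrightarrow> gadj (i*U+j) (i*U+p+1)"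
  unfolding gadj_def gam_def by blast+

lemma gadj_B: "j < p \<Longrightarrow> gadj (i*U+p) (i*U+p+2+j)" "j < p \<Longrightarrow> gadj (i*U+p+2+j) (i*U+p)"
  unfolding gadj_def gam_def by blast+

lemma gam_shift: "gam a b \<Longrightarrow> gam (a+n) (b+n)"
proof -
  assume "gam a b"
  then consider "b = Suc a" | i j where "j < p" "a = i*U+p+1" "b = i*U+j"
    | i j where "j < p" "a = i*U+p" "b = i*U+p+2+j" unfolding gam_def by blast
  then show ?thesis
  proof cases
    case 1 then show ?thesis unfolding gam_def by simp
  next
    case (2 i j)
    have "a + n = (i+k)*U+p+1" "b+n = (i+k)*U+j" using 2 ndef by (simp_all add: algebra_simps)
    then show ?thesis unfolding gam_def using 2 by blast
  next
    case (3 i j)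
    have "a + n = (i+k)*U+p" "b+n = (i+k)*U+p+2+j" using 3 ndef by (simp_all add: algebra_simps)
    then show ?thesis unfolding gam_def using 3 by blast
  qed
qed

lemma gadj_shift: "gadj a b \<Longrightarrow> gadj (a+n) (b+n)"
  unfolding gadj_def using gam_shift by blast

lemma gam_refl:
  assumes g: "gam a b" and aM: "a \<le> M" and bM: "b \<le> M" and M: "M mod U = 0"
  shows "gadj (M-a) (M-b)"
proof -
  obtain m where Mm: "M = m*U" using M by (metis mult.commute mod_eq_0_iff_dvd dvdE)
  from g consider "b = Suc a" | i j where "j < p" "a = i*U+p+1" "b = i*U+j"
    | i j where "j < p" "a = i*U+p" "b = i*U+p+2+j" unfolding gam_def by blast
  then show ?thesis
  proof cases
    case 1 then have "M - a = Suc (M - b)" using bM by arith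
    then show ?thesis unfolding gadj_def gam_def by simp
  next
    case (2 i j)
    have "i < m"
    proof (rule ccontr)
      assume "\<not> i < m" then have "m*U \<le> i*U" by (simp add: mult_le_mono1)
      then show False using aM 2 Mm by linarith
    qed
    then obtain d where md: "m = Suc (i + d)" by (metis add_Suc_right less_iff_Suc_add)
    have e1: "M - a = d*U + p" using Mm md 2 Udef by (simp add: algebra_simps)
    have e2: "M - b = d*U + p + 2 + (p - 1 - j)" using Mm md 2 Udef by (simp add: algebra_simps)
    have "p - 1 - j < p" using p6 by simp
    then show ?thesis unfolding gadj_def gam_def using e1 e2 by blast
  next
    case (3 i j)
    have "i < m"
    proof (rule ccontr)
      assume "\<not> i < m" then have "m*U \<le> i*U" by (simp add: mult_le_mono1)
      then show False using aM 3 Mm bM by linarith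
    qed
    then obtain d where md: "m = Suc (i + d)" by (metis add_Suc_right less_iff_Suc_add)
    have e1: "M - a = d*U + p + 1" using Mm md 3 Udef by (simp add: algebra_simps)
    have e2: "M - b = d*U + (p - 1 - j)" using Mm md 3 Udef by (simp add: algebra_simps)
    have "p - 1 - j < p" using p6 by simp
    then show ?thesis unfolding gadj_def gam_def using e1 e2 by blast
  qed
qed


definition Er :: "nat set set" where "Er = (\<lambda>x. {x, Suc x mod n}) ` {..<n}"
definition EA :: "nat set set" where "EA = (\<lambda>(i,j). {i*U+p+1, i*U+j}) ` ({..<k} \<times> {..<p})"
definition EB :: "nat set set" where "EB = (\<lambda>(i,j). {i*U+p, (i*U+p+2+j) mod n}) ` ({..<k} \<times> {..<p})"
definition EE :: "nat set set" where "EE = Er \<union> EA \<union> EB"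

lemma modU: assumes "r < U" shows "(i*U + r) mod n = (i mod k)*U + r"
proof -
  have "i*U = (i div k)*n + (i mod k)*U"
  proof -
    have "(i div k)*n + (i mod k)*U = (i div k * k + i mod k)*U" unfolding ndef by (simp only: add_mult_distrib mult.assoc)
    then show ?thesis by simp
  qed
  then have "i*U + r = (i div k)*n + ((i mod k)*U + r)" by simp
  moreover have "(i mod k)*U + r < n"
  proof -
    have "i mod k < k" using k3 by simp
    then have "(i mod k)*U + U \<le> k*U" by (metis Suc_leI mult_Suc mult_le_mono1 add.commute)
    then show ?thesis using assms ndef by linarith
  qed
  ultimately show ?thesis by (metis add.assoc mod_mult_self3 mod_less)
qed

lemma gam_E: assumes "gam a b" shows "{a mod n, b mod n} \<in> EE"
proof -
  from assms consider "b = Suc a" | i j where "j < p" "a = i*U+p+1" "b = i*U+j"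
    | i j where "j < p" "a = i*U+p" "b = i*U+p+2+j" unfolding gam_def by blast
  then show ?thesis
  proof cases
    case 1
    have "b mod n = Suc (a mod n) mod n" using 1 by (simp add: mod_Suc_eq)
    then have "{a mod n, b mod n} \<in> Er" unfolding Er_def
      by (intro rev_image_eqI[of "a mod n"]) (use npos in auto)
    then show ?thesis unfolding EE_def by blast
  next
    case (2 i j)
    have "a mod n = (i mod k)*U+p+1" using modU[of "p+1" i] 2 Udef by simp
    moreover have "b mod n = (i mod k)*U+j" using modU[of j i] 2 Udef by simp
    moreover have "(i mod k, j) \<in> {..<k} \<times> {..<p}" using k3 2 by simp
    ultimately have "{a mod n, b mod n} \<in> EA" unfolding EA_def
      by (intro rev_image_eqI[of "(i mod k, j)"]) auto
    then show ?thesis unfolding EE_def by blast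
  next
    case (3 i j)
    have "a mod n = (i mod k)*U+p" using modU[of "p" i] 3 Udef by simp
    moreover have "b mod n = ((i mod k)*U+p+2+j) mod n"
    proof -
      have "(i*U) mod n = (i mod k)*U" using modU[of 0 i] Upos by simp
      then have "(i*U + (p+2+j)) mod n = ((i mod k)*U + (p+2+j)) mod n" by (metis mod_add_left_eq)
      then show ?thesis using 3 by (simp add: add.assoc)
    qed
    moreover have "(i mod k, j) \<in> {..<k} \<times> {..<p}" using k3 3 by simp
    ultimately have "{a mod n, b mod n} \<in> EB" unfolding EB_def
      by (intro rev_image_eqI[of "(i mod k, j)"]) auto
    then show ?thesis unfolding EE_def by blast
  qed
qed

lemma gadj_E: assumes "gadj a b" shows "{a mod n, b mod n} \<in> EE"
proof (cases "gam a b")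
  case True then show ?thesis by (rule gam_E)
next
  case False then have "gam b a" using assms unfolding gadj_def by blast
  then have "{b mod n, a mod n} \<in> EE" by (rule gam_E)
  then show ?thesis by (simp add: insert_commute)
qed

definition closeadj where "closeadj l h \<longleftrightarrow> gadj l h \<or> gadj l (h+n) \<or> gadj (l+n) h"

lemma closeadj_E: assumes "closeadj l h" shows "{l mod n, h mod n} \<in> EE"
proof -
  from assms consider "gadj l h" | "gadj l (h+n)" | "gadj (l+n) h" unfolding closeadj_def by blast
  then show ?thesis
  proof cases
    case 1 then show ?thesis by (rule gadj_E)
  next
    case 2 then have "{l mod n, (h+n) mod n} \<in> EE" by (rule gadj_E)
    then show ?thesis by simp
  next
    case 3 then have "{(l+n) mod n, h mod n} \<in> EE" by (rule gadj_E)
    then show ?thesis by simp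
  qed
qed

definition vcyc where "vcyc w vs \<longleftrightarrow> 3 \<le> length vs \<and> distinct vs \<and> set vs \<subseteq> {w..<w+n}
   \<and> successively gadj vs \<and> closeadj (last vs) (hd vs)"

lemma inj_window: "inj_on (\<lambda>x. x mod n) {w..<w+n}"
proof (rule inj_onI)
  fix x y assume x: "x \<in> {w..<w+n}" and y: "y \<in> {w..<w+n}" and e: "x mod n = y mod n"
  show "x = y"
  proof (rule ccontr)
    assume "x \<noteq> y"
    then consider "x < y" | "y < x" by linarith
    then show False
    proof cases
      case 1
      then have "n dvd y - x" using e mod_eq_dvd_iff_nat[of x y n] by simp
      moreover have "0 < y - x" "y - x < n" using 1 x y by auto
      ultimately show False by (simp add: nat_dvd_not_less)
    next
      case 2
      then have "n dvd x - y" using e mod_eq_dvd_iff_nat[of y x n] by simp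
      moreover have "0 < x - y" "x - y < n" using 2 x y by auto
      ultimately show False by (simp add: nat_dvd_not_less)
    qed
  qed
qed

lemma vcyc_cycle:
  assumes "vcyc w vs"
  shows "is_cycle {..<n} EE (map (\<lambda>x. x mod n) vs)"
proof -
  have len: "3 \<le> length vs" and dis: "distinct vs" and st: "set vs \<subseteq> {w..<w+n}"
    and sc: "successively gadj vs" and cl: "closeadj (last vs) (hd vs)"
    using assms unfolding vcyc_def by auto
  let ?c = "map (\<lambda>x. x mod n) vs"
  have "distinct ?c" using dis inj_on_subset[OF inj_window[of w] st] by (simp add: distinct_map)
  moreover have "set ?c \<subseteq> {..<n}" using npos by auto
  moreover have "\<forall>i < length ?c. {?c ! i, ?c ! ((i + 1) mod length ?c)} \<in> EE"
  proof (intro allI impI)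
    fix i assume i: "i < length ?c"
    show "{?c ! i, ?c ! ((i + 1) mod length ?c)} \<in> EE"
    proof (cases "Suc i < length vs")
      case True
      then have "gadj (vs!i) (vs ! Suc i)" using sc successively_nth by blast
      then show ?thesis using True by (simp add: gadj_E)
    next
      case False
      then have ii: "i = length vs - 1" using i by simp
      have ne: "vs \<noteq> []" using len by auto
      have "i + 1 = length ?c" using ii len by simp
      then have "(i+1) mod length ?c = 0" by simp
      moreover have "vs ! i = last vs" using ii ne by (simp add: last_conv_nth)
      moreover have "vs ! 0 = hd vs" using ne by (simp add: hd_conv_nth)
      moreover have "0 < length vs" using len by linarith
      ultimately show ?thesis using closeadj_E[OF cl] i by simp
    qed
  qed
  ultimately show ?thesis unfolding is_cycle_def using len by simp
qed

lemma pair_edge: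
  assumes "vs = xs @ a # b # ys"
  shows "{a mod n, b mod n} \<in> cycle_edges (map (\<lambda>x. x mod n) vs)"
proof -
  let ?c = "map (\<lambda>x. x mod n) vs"
  let ?i = "length xs"
  have "?i < length ?c" "Suc ?i < length ?c" using assms by auto
  moreover have "?c ! ?i = a mod n" "?c ! Suc ?i = b mod n" using assms by (auto simp: nth_append)
  ultimately have "{a mod n, b mod n} = {?c ! ?i, ?c ! ((?i+1) mod length ?c)}" by simp
  then show ?thesis unfolding cycle_edges_def using \<open>?i < length ?c\<close> by blast
qed

lemma close_edge:
  assumes "vs \<noteq> []"
  shows "{last vs mod n, hd vs mod n} \<in> cycle_edges (map (\<lambda>x. x mod n) vs)"
proof -
  let ?c = "map (\<lambda>x. x mod n) vs"
  let ?i = "length vs - 1"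
  have i: "?i < length ?c" using assms by simp
  have "?i + 1 = length ?c" using assms by simp
  then have "(?i+1) mod length ?c = 0" by simp
  moreover have "?c ! ?i = last vs mod n" using assms by (simp add: last_conv_nth)
  moreover have "?c ! 0 = hd vs mod n" using assms by (simp add: hd_conv_nth)
  ultimately have "{last vs mod n, hd vs mod n} = {?c ! ?i, ?c ! ((?i+1) mod length ?c)}" by simp
  then show ?thesis unfolding cycle_edges_def using i by blast
qed

definition has_pair where "has_pair vs a b \<longleftrightarrow> (\<exists>xs ys. vs = xs @ a # b # ys) \<or> (\<exists>xs ys. vs = xs @ b # a # ys)
   \<or> (last vs = a \<and> hd vs = b) \<or> (last vs = b \<and> hd vs = a)"

lemma has_pair_edge:
  assumes "has_pair vs a b" "vs \<noteq> []"
  shows "{a mod n, b mod n} \<in> cycle_edges (map (\<lambda>x. x mod n) vs)"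
proof -
  from assms(1) consider xs ys where "vs = xs @ a # b # ys" | xs ys where "vs = xs @ b # a # ys"
    | "last vs = a \<and> hd vs = b" | "last vs = b \<and> hd vs = a" unfolding has_pair_def by blast
  then show ?thesis
  proof cases
    case 1 then show ?thesis by (rule pair_edge)
  next
    case 2 then have "{b mod n, a mod n} \<in> cycle_edges (map (\<lambda>x. x mod n) vs)" by (rule pair_edge)
    then show ?thesis by (simp add: insert_commute)
  next
    case 3 then show ?thesis using close_edge[OF assms(2)] by simp
  next
    case 4 then show ?thesis using close_edge[OF assms(2)] by (simp add: insert_commute)
  qed
qed


lemma gadj_refl: assumes "gadj x y" "x \<le> M" "y \<le> M" "M mod U = 0" shows "gadj (M-x) (M-y)"
proof (cases "gam x y")
  case True then show ?thesis by (rule gam_refl[OF _ assms(2-4)])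
next
  case False then have "gam y x" using assms(1) unfolding gadj_def by blast
  then have "gadj (M-y) (M-x)" by (rule gam_refl[OF _ assms(3) assms(2) assms(4)])
  then show ?thesis by (rule gadj_sym)
qed

lemma vcyc_refl:
  assumes v: "vcyc w vs" and hp: "has_pair vs a b" and M: "M mod U = 0" and bd: "\<forall>x\<in>set vs. x + n \<le> M"
  shows "vcyc (M + 1 - w - n) (map (\<lambda>x. M - x) vs) \<and> has_pair (map (\<lambda>x. M - x) vs) (M - a) (M - b)"
proof -
  have len: "3 \<le> length vs" and dis: "distinct vs" and st: "set vs \<subseteq> {w..<w+n}"
    and sc: "successively gadj vs" and cl: "closeadj (last vs) (hd vs)"
    using v unfolding vcyc_def by auto
  have ne: "vs \<noteq> []" using len by auto
  let ?f = "\<lambda>x. M - x"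
  have le: "\<And>x. x \<in> set vs \<Longrightarrow> x + n \<le> M" using bd by blast
  have "hd vs \<in> set vs" using ne by simp
  then have wM: "w + n \<le> M + 1" using st le by force
  have "inj_on ?f (set vs)" using le by (intro inj_onI) (metis add_leD1 diff_diff_cancel)
  then have d2: "distinct (map ?f vs)" using dis by (simp add: distinct_map)
  have s2: "set (map ?f vs) \<subseteq> {M + 1 - w - n..<M + 1 - w - n + n}"
  proof
    fix y assume "y \<in> set (map ?f vs)"
    then obtain x where x: "x \<in> set vs" "y = M - x" by auto
    then have "w \<le> x" "x < w + n" "x + n \<le> M" using st le by auto
    then show "y \<in> {M + 1 - w - n..<M + 1 - w - n + n}" using x wM by auto
  qed
  have sc2: "successively gadj (map ?f vs)"
    unfolding successively_map
  proof (rule successively_mono[OF sc])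
    fix x y assume "x \<in> set vs" "y \<in> set vs" "gadj x y"
    then show "gadj (M - x) (M - y)" using gadj_refl le M by (meson add_leD1)
  qed
  have lM: "last vs + n \<le> M" "hd vs + n \<le> M" using le ne by auto
  have cl2: "closeadj (last (map ?f vs)) (hd (map ?f vs))"
  proof -
    have hl: "last (map ?f vs) = M - last vs" "hd (map ?f vs) = M - hd vs" using ne by (simp_all add: last_map hd_map)
    from cl consider "gadj (last vs) (hd vs)" | "gadj (last vs) (hd vs + n)" | "gadj (last vs + n) (hd vs)"
      unfolding closeadj_def by blast
    then show ?thesis
    proof cases
      case 1 then have "gadj (M - last vs) (M - hd vs)" using gadj_refl M lM by simp
      then show ?thesis unfolding closeadj_def hl by blast
    next
      case 2 then have "gadj (M - last vs) (M - (hd vs + n))" using gadj_refl M lM by simp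
      then have "gadj (M - last vs + n) (M - (hd vs + n) + n)" by (rule gadj_shift)
      moreover have "M - (hd vs + n) + n = M - hd vs" using lM by simp
      ultimately show ?thesis unfolding closeadj_def hl by auto
    next
      case 3 then have "gadj (M - (last vs + n)) (M - hd vs)" using gadj_refl M lM by simp
      then have "gadj (M - (last vs + n) + n) (M - hd vs + n)" by (rule gadj_shift)
      moreover have "M - (last vs + n) + n = M - last vs" using lM by simp
      ultimately show ?thesis unfolding closeadj_def hl by auto
    qed
  qed
  have "vcyc (M + 1 - w - n) (map ?f vs)" unfolding vcyc_def using len d2 s2 sc2 cl2 by simp
  moreover have "has_pair (map ?f vs) (M - a) (M - b)"
  proof -
    from hp consider xs ys where "vs = xs @ a # b # ys" | xs ys where "vs = xs @ b # a # ys"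
      | "last vs = a \<and> hd vs = b" | "last vs = b \<and> hd vs = a" unfolding has_pair_def by blast
    then show ?thesis
    proof cases
      case (1 xs ys) then have "map ?f vs = map ?f xs @ (M-a) # (M-b) # map ?f ys" by simp
      then show ?thesis unfolding has_pair_def by blast
    next
      case (2 xs ys) then have "map ?f vs = map ?f xs @ (M-b) # (M-a) # map ?f ys" by simp
      then show ?thesis unfolding has_pair_def by blast
    next
      case 3 then show ?thesis unfolding has_pair_def using ne by (simp add: last_map hd_map)
    next
      case 4 then show ?thesis unfolding has_pair_def using ne by (simp add: last_map hd_map)
    qed
  qed
  ultimately show ?thesis by blast
qed

lemma succ_upt: "successively gadj [s..<t]"
proof (induction t)
  case 0 then show ?case by simp
next
  case (Suc t)
  show ?case
  proof (cases "s < t")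
    case True
    have "[s..<Suc t] = [s..<t] @ [t]" using True by simp
    moreover have "gadj (t - 1) t" using gadj_ring(1)[of "t-1"] True by simp
    ultimately show ?thesis using Suc True by (simp add: successively_append_iff)
  next
    case False
    then have "[s..<Suc t] = [] \<or> [s..<Suc t] = [t]" by (cases "s = t") auto
    then show ?thesis by auto
  qed
qed

definition con where "con zs a b \<longleftrightarrow> (\<exists>xs ys. zs = xs @ a # b # ys)"

lemma con_app1: "con zs a b \<Longrightarrow> con (P @ zs) a b" unfolding con_def by (metis append.assoc)
lemma con_app2: assumes "con zs a b" shows "con (zs @ Q) a b"
proof -
  obtain xs ys where "zs = xs @ a # b # ys" using assms unfolding con_def by blast
  then have "zs @ Q = xs @ a # b # (ys @ Q)" by simp
  then show ?thesis unfolding con_def by blast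
qed
lemma con_Cons: "con zs a b \<Longrightarrow> con (x # zs) a b" using con_app1[of zs a b "[x]"] by simp
lemma con_two: "con (a # b # ys) a b" unfolding con_def by (metis append_Nil)
lemma con_upt: assumes "s \<le> x" "Suc x < t" shows "con [s..<t] x (Suc x)"
proof -
  have "[s..<t] = [s..<x] @ [x..<t]" using upt_add_eq_append[of s x "t - x"] assms by simp
  moreover have "[x..<t] = x # Suc x # [Suc (Suc x)..<t]" using assms by (simp add: upt_conv_Cons)
  ultimately have "[s..<t] = [s..<x] @ x # Suc x # [Suc (Suc x)..<t]" by simp
  then show ?thesis unfolding con_def by blast
qed
lemma con_hp: "con vs a b \<Longrightarrow> has_pair vs a b" unfolding con_def has_pair_def by blast

definition fan where "fan c a b = (c+p+1) # [c+a..<c+b+1]"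

lemma fan_ok:
  assumes c: "c = i*U" and ab: "a < b" "b \<le> p"
  shows "vcyc c (fan c a b)" "length (fan c a b) = b - a + 2"
proof -
  let ?v = "fan c a b"
  show l: "length ?v = b - a + 2" unfolding fan_def using ab by simp
  have "c+p+1 \<notin> set [c+a..<c+b+1]" using ab by simp
  then have "distinct ?v" unfolding fan_def by simp
  moreover have "set ?v \<subseteq> {c..<c+n}" unfolding fan_def using ab nU Udef by auto
  moreover have "successively gadj ?v"
  proof -
    have "[c+a..<c+b+1] = (c+a) # [Suc (c+a)..<c+b+1]" using ab by (simp add: upt_conv_Cons)
    moreover have "gadj (c+p+1) (c+a)" using gadj_A(1)[of a i] ab c by simp
    ultimately show ?thesis unfolding fan_def successively_Cons using succ_upt[of "c+a" "c+b+1"] by simp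
  qed
  moreover have "closeadj (last ?v) (hd ?v)"
  proof -
    have "last ?v = c + b" "hd ?v = c+p+1" unfolding fan_def using ab by simp_all
    moreover have "gadj (c+b) (c+p+1)"
    proof (cases "b < p")
      case True then show ?thesis using gadj_A(2)[of b i] c by simp
    next
      case False then have "b = p" using ab by simp
      then show ?thesis using gadj_ring(1)[of "c+p"] by simp
    qed
    ultimately show ?thesis unfolding closeadj_def by simp
  qed
  ultimately show "vcyc c ?v" unfolding vcyc_def using l ab by simp
qed

definition L3 where "L3 c a w = (c+p+1) # [c+a..<c+p+1] @ rev [c+p+2..<c+p+3+w]"

lemma succ_rev_upt: "successively gadj (rev [s..<t])"
proof -
  have "successively (\<lambda>x y. gadj y x) [s..<t]"
    using succ_upt[of s t] by (rule successively_mono) (simp add: gadj_sym)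
  then show ?thesis by simp
qed

lemma L3_ok:
  assumes c: "c = i*U" and a: "a < p" and w: "w < p"
  shows "vcyc c (L3 c a w)" "length (L3 c a w) = p - a + w + 3"
proof -
  let ?v = "L3 c a w"
  show l: "length ?v = p - a + w + 3" unfolding L3_def using a by simp
  have "distinct ?v" unfolding L3_def by auto
  moreover have "set ?v \<subseteq> {c..<c+n}" unfolding L3_def using a w nU Udef by auto
  moreover have "successively gadj ?v"
  proof -
    have u: "[c+a..<c+p+1] = (c+a) # [Suc (c+a)..<c+p+1]" using a by (simp add: upt_conv_Cons)
    have g1: "gadj (c+p+1) (c+a)" using gadj_A(1)[of a i] a c by simp
    have g2: "gadj (c+p) (c+p+2+w)" using gadj_B(1)[of w i] w c by simp
    have s1: "successively gadj [c+a..<c+p+1]" by (rule succ_upt)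
    have s2: "successively gadj (rev [c+p+2..<c+p+3+w])" by (rule succ_rev_upt)
    have h: "hd (rev [c+p+2..<c+p+3+w]) = c+p+2+w" by (simp add: hd_rev)
    have lst: "last [c+a..<c+p+1] = c+p" using a by simp
    have "successively gadj ([c+a..<c+p+1] @ rev [c+p+2..<c+p+3+w])"
      unfolding successively_append_iff using s1 s2 g2 h lst by simp
    then show ?thesis unfolding L3_def successively_Cons using u g1 by simp
  qed
  moreover have "closeadj (last ?v) (hd ?v)"
  proof -
    have "last ?v = c + p + 2" "hd ?v = c+p+1" unfolding L3_def by (simp_all add: last_rev)
    moreover have "gadj (c+p+2) (c+p+1)" using gadj_ring(2)[of "c+p+1"] by simp
    ultimately show ?thesis unfolding closeadj_def by simp
  qed
  ultimately show "vcyc c ?v" unfolding vcyc_def using l by simp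
qed

lemma L3_front: "a < p \<Longrightarrow> con (L3 c a w) (c+p+1) (c+a)"
  unfolding L3_def by (simp add: upt_conv_Cons con_two)

lemma L3_upt: assumes "x < p" shows "con (L3 c 0 w) (c+x) (c+x+1)"
proof -
  have "con [c..<c+p+1] (c+x) (Suc (c+x))" by (rule con_upt) (use assms in auto)
  then have "con ([c..<c+p+1] @ rev [c+p+2..<c+p+3+w]) (c+x) (Suc (c+x))" by (rule con_app2)
  then have "con ((c+p+1) # [c..<c+p+1] @ rev [c+p+2..<c+p+3+w]) (c+x) (Suc (c+x))" by (rule con_Cons)
  then show ?thesis unfolding L3_def by simp
qed

declare upt_Suc[simp del]

lemma gA: assumes "c = i*U" "b \<le> p" shows "gadj (c+p+1) (c+b)"
proof (cases "b < p")
  case True then show ?thesis using gadj_A(1)[of b i] assms by simp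
next
  case False then have "b = p" using assms by simp
  then show ?thesis using gadj_ring(2)[of "c+p"] by simp
qed

lemma gB: assumes "c = i*U" "1 \<le> t" "t \<le> p+1" shows "gadj (c+p) (c+p+t)"
proof (cases "t = 1")
  case True then show ?thesis using gadj_ring(1)[of "c+p"] by simp
next
  case False then have "t - 2 < p" "t = 2 + (t - 2)" using assms by auto
  then show ?thesis using gadj_B(1)[of "t-2" i] assms by (metis add.assoc)
qed

lemma succ_join: "successively P (xs @ [x]) \<Longrightarrow> successively P (x # ys) \<Longrightarrow> successively P (xs @ x # ys)"
  by (induction xs) (auto simp: successively_Cons hd_append split: if_splits)

definition upath where "upath c P \<longleftrightarrow> P \<noteq> [] \<and> distinct P \<and> set P \<subseteq> {c..<c+U}
   \<and> successively gadj P \<and> hd P = c \<and> gadj (last P) (c+U)"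

definition S1 where "S1 c a b j = [c..<c+a] @ (c+p+1) # [c+b..<c+p+1] @ [c+U-j..<c+U]"

lemma S1_ok:
  assumes c: "c = i*U" and ab: "1 \<le> a" "a \<le> b" "b \<le> p" and j: "j < p"
  shows "upath c (S1 c a b j)" "length (S1 c a b j) = a + (p + 1 - b) + j + 1"
proof -
  let ?X = "[c..<c+a]" and ?Z = "[c+b..<c+p+1]" and ?Y = "[c+U-j..<c+U]"
  let ?v = "S1 c a b j"
  show "length ?v = a + (p + 1 - b) + j + 1" unfolding S1_def using ab j Udef by simp
  have UJ: "c + U - j = c + p + (p + 1 - j)" using Udef j by simp
  have "distinct ?v" unfolding S1_def using ab j Udef by auto
  moreover have "set ?v \<subseteq> {c..<c+U}" unfolding S1_def using ab j Udef by auto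
  moreover have "successively gadj ?v"
  proof -
    have sX: "successively gadj ?X" "successively gadj ?Z" "successively gadj ?Y" by (rule succ_upt)+
    have lX: "last ?X = c + (a - 1)" "?X \<noteq> []" using ab by auto
    have g1: "gadj (c + (a-1)) (c+p+1)" using gadj_A(2)[of "a-1" i] ab c by simp
    have hZ: "hd ?Z = c + b" "?Z \<noteq> []" "last ?Z = c + p" using ab by auto
    have g2: "gadj (c+p+1) (c+b)" by (rule gA[OF c ab(3)])
    have g3: "gadj (c+p) (c+U-j)"
    proof -
      have "gadj (c+p) (c + p + (p + 1 - j))" by (rule gB[OF c]) (use j in auto)
      then show ?thesis using UJ by simp
    qed
    have Y: "successively gadj ([c+p] @ ?Y)"
    proof (cases "j = 0")
      case True then show ?thesis by simp
    next
      case False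
      then have "?Y = (c+U-j) # [Suc (c+U-j)..<c+U]" using Udef by (simp add: upt_conv_Cons)
      then show ?thesis using g3 sX(3) by (simp add: successively_Cons)
    qed
    have Z: "?Z = [c+b..<c+p] @ [c+p]" using ab by (simp add: upt_Suc)
    have "successively gadj (?Z @ ?Y)"
    proof -
      have "successively gadj [c+b..<c+p+1]" by (rule succ_upt)
      then have "successively gadj ([c+b..<c+p] @ [c+p])" using Z by simp
      from succ_join[OF this] Y have "successively gadj ([c+b..<c+p] @ (c+p) # ?Y)" by simp
      then show ?thesis using Z by simp
    qed
    then have "successively gadj ((c+p+1) # ?Z @ ?Y)"
      unfolding successively_Cons using hZ g2 by simp
    then show ?thesis unfolding S1_def successively_append_iff using sX lX g1 by simp
  qed
  moreover have "hd ?v = c" unfolding S1_def using ab by simp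
  moreover have "gadj (last ?v) (c+U)"
  proof (cases "j = 0")
    case True
    then have "last ?v = c + p" unfolding S1_def using ab by simp
    moreover have "gadj (c+p) (c+U)"
    proof -
      have g: "gadj (c+p) (c+p+(p+1))" by (rule gB[OF c]) auto
      have e: "c+p+(p+1) = c+U" using Udef by simp
      from g show ?thesis unfolding e .
    qed
    ultimately show ?thesis by simp
  next
    case False
    then have "c + U - j < c + U" using Udef by simp
    then have "last ?v = c + U - 1" unfolding S1_def using ab by (simp add: last_append)
    moreover have "c + U - 1 + 1 = c + U" using Udef by simp
    ultimately show ?thesis using gadj_ring(1)[of "c+U-1"] by simp
  qed
  ultimately show "upath c ?v" unfolding upath_def by (auto simp: S1_def)
qed

definition S2 where "S2 c j = [c..<c+p+1] @ [c+U-j..<c+U]"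

lemma S2_ok:
  assumes c: "c = i*U" and j: "j \<le> p"
  shows "upath c (S2 c j)" "length (S2 c j) = p + 1 + j"
proof -
  let ?X = "[c..<c+p+1]" and ?Y = "[c+U-j..<c+U]"
  let ?v = "S2 c j"
  show "length ?v = p + 1 + j" unfolding S2_def using j Udef by simp
  have UJ: "c + U - j = c + p + (p + 1 - j)" using Udef j by simp
  have "distinct ?v" unfolding S2_def using j Udef by auto
  moreover have "set ?v \<subseteq> {c..<c+U}" unfolding S2_def using j Udef by auto
  moreover have "successively gadj ?v"
  proof -
    have sX: "successively gadj ?X" "successively gadj ?Y" by (rule succ_upt)+
    have lX: "last ?X = c + p" "?X \<noteq> []" by auto
    have g3: "gadj (c+p) (c+U-j)"
    proof -
      have "gadj (c+p) (c + p + (p + 1 - j))" by (rule gB[OF c]) (use j in auto)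
      then show ?thesis using UJ by simp
    qed
    have Y: "successively gadj ([c+p] @ ?Y)"
    proof (cases "j = 0")
      case True then show ?thesis by simp
    next
      case False
      then have "?Y = (c+U-j) # [Suc (c+U-j)..<c+U]" using Udef by (simp add: upt_conv_Cons)
      then show ?thesis using g3 sX(2) by (simp add: successively_Cons)
    qed
    have Z: "?X = [c..<c+p] @ [c+p]" by (simp add: upt_Suc)
    have "successively gadj ([c..<c+p] @ [c+p])" using sX(1) Z by simp
    from succ_join[OF this] Y have "successively gadj ([c..<c+p] @ (c+p) # ?Y)" by simp
    then show ?thesis unfolding S2_def using Z by simp
  qed
  moreover have "hd ?v = c" unfolding S2_def by simp
  moreover have "gadj (last ?v) (c+U)"
  proof (cases "j = 0")
    case True
    then have "last ?v = c + p" unfolding S2_def by simp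
    moreover have "gadj (c+p) (c+U)"
    proof -
      have g: "gadj (c+p) (c+p+(p+1))" by (rule gB[OF c]) auto
      have e: "c+p+(p+1) = c+U" using Udef by simp
      from g show ?thesis unfolding e .
    qed
    ultimately show ?thesis by simp
  next
    case False
    then have "c + U - j < c + U" using Udef by simp
    then have "last ?v = c + U - 1" unfolding S2_def by (simp add: last_append)
    moreover have "c + U - 1 + 1 = c + U" using Udef by simp
    ultimately show ?thesis using gadj_ring(1)[of "c+U-1"] by simp
  qed
  ultimately show "upath c ?v" unfolding upath_def by (auto simp: S2_def)
qed

declare upt_Suc[simp]

definition gpath where "gpath c L P \<longleftrightarrow> P \<noteq> [] \<and> distinct P \<and> set P \<subseteq> {c..<c+L}
   \<and> successively gadj P \<and> hd P = c \<and> gadj (last P) (c+L)"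

lemma upath_gpath: "upath c P = gpath c U P" unfolding upath_def gpath_def by simp

lemma gpath_app:
  assumes P: "gpath c L1 P" and Q: "gpath (c+L1) L2 Q"
  shows "gpath c (L1+L2) (P @ Q)"
proof -
  have P1: "P \<noteq> []" "distinct P" "set P \<subseteq> {c..<c+L1}" "successively gadj P" "hd P = c" "gadj (last P) (c+L1)"
    using P unfolding gpath_def by auto
  have Q1: "Q \<noteq> []" "distinct Q" "set Q \<subseteq> {c+L1..<c+L1+L2}" "successively gadj Q" "hd Q = c+L1" "gadj (last Q) (c+L1+L2)"
    using Q unfolding gpath_def by auto
  have "set P \<inter> set Q = {}"
  proof -
    { fix x assume "x \<in> set P" "x \<in> set Q"
      then have "x < c+L1" "c+L1 \<le> x" using P1(3) Q1(3) by auto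
      then have False by simp }
    then show ?thesis by auto
  qed
  then have "distinct (P @ Q)" using P1 Q1 by simp
  moreover have "set (P @ Q) \<subseteq> {c..<c+(L1+L2)}" using P1(3) Q1(3) by auto
  moreover have "successively gadj (P @ Q)" unfolding successively_append_iff using P1 Q1 by simp
  moreover have "hd (P @ Q) = c" using P1 by simp
  moreover have "gadj (last (P @ Q)) (c+(L1+L2))" using Q1 by (simp add: add.assoc)
  ultimately show ?thesis unfolding gpath_def using P1 by simp
qed

lemma gpath_concat:
  assumes "\<And>t. t < N \<Longrightarrow> gpath (b + t*U) U (Q t)" "0 < N"
  shows "gpath b (N*U) (concat (map Q [0..<N])) \<and> length (concat (map Q [0..<N])) = (\<Sum>t<N. length (Q t))"
  using assms
proof (induction N)
  case 0 then show ?case by simp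
next
  case (Suc N)
  show ?case
  proof (cases "N = 0")
    case True
    then show ?thesis using Suc.prems(1)[of 0] by simp
  next
    case False
    have IH: "gpath b (N*U) (concat (map Q [0..<N]))" "length (concat (map Q [0..<N])) = (\<Sum>t<N. length (Q t))"
      using Suc.IH Suc.prems False by auto
    have "gpath (b + N*U) U (Q N)" using Suc.prems(1)[of N] by simp
    then have "gpath b (N*U + U) (concat (map Q [0..<N]) @ Q N)" using gpath_app[OF IH(1)] by simp
    then show ?thesis using IH(2) by (simp add: add.commute)
  qed
qed

definition other where "other c cc = S1 c (min (cc-2) p) p (cc - 2 - min (cc-2) p)"

lemma other_ok:
  assumes c: "c = i*U" and cc: "3 \<le> cc" "cc \<le> 2*p+1"
  shows "upath c (other c cc)" "length (other c cc) = cc"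
proof -
  have h: "1 \<le> min (cc-2) p" "min (cc-2) p \<le> p" "cc - 2 - min (cc-2) p < p" using cc p6 by auto
  show "upath c (other c cc)" unfolding other_def using S1_ok(1)[OF c h(1,2) order_refl h(3)] .
  show "length (other c cc) = cc" unfolding other_def using S1_ok(2)[OF c h(1,2) order_refl h(3)] cc by simp
qed

lemma sum_greedy: "(\<Sum>t<(N::nat). min (D::nat) (r - t*D)) = min r (N*D)"
proof (induction N)
  case 0 then show ?case by simp
next
  case (Suc N)
  then show ?case by (cases "r \<le> N*D") (auto simp: min_def)
qed

lemma around:
  assumes c: "c = i*U" and S: "upath c S" and R: "3*(k-1) \<le> R" "R \<le> (2*p+1)*(k-1)"
  shows "\<exists>ys. vcyc c (S @ ys) \<and> length (S @ ys) = length S + R"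
proof -
  define D where "D = 2*p - 2"
  define r where "r = R - 3*(k-1)"
  define cs where "cs t = 3 + min D (r - t*D)" for t
  define Q where "Q t = other (c + U + t*U) (cs t)" for t
  have rD: "r \<le> (k-1)*D" using R unfolding r_def D_def by (simp add: algebra_simps)
  have csb: "3 \<le> cs t" "cs t \<le> 2*p+1" for t unfolding cs_def D_def using p6 by auto
  have Qok: "gpath (c + U + t*U) U (Q t)" "length (Q t) = cs t" for t
  proof -
    have cc: "c + U + t*U = (i+1+t)*U" using c by (simp add: algebra_simps)
    show "gpath (c + U + t*U) U (Q t)" unfolding Q_def upath_gpath[symmetric] using other_ok(1)[OF cc csb] .
    show "length (Q t) = cs t" unfolding Q_def using other_ok(2)[OF cc csb] .
  qed
  define ys where "ys = concat (map Q [0..<k-1])"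
  have k1: "0 < k - 1" using k3 by simp
  have G: "gpath (c+U) ((k-1)*U) ys" and L: "length ys = (\<Sum>t<k-1. cs t)"
    using gpath_concat[of "k-1" "c+U" Q] Qok k1 unfolding ys_def by auto
  have "(\<Sum>t<k-1. cs t) = 3*(k-1) + (\<Sum>t<k-1. min D (r - t*D))" unfolding cs_def by (simp add: sum.distrib)
  also have "\<dots> = 3*(k-1) + r"
  proof -
    have "(\<Sum>t<k-1. min D (r - t*D)) = min r ((k-1)*D)" by (rule sum_greedy)
    then show ?thesis using rD by simp
  qed
  also have "\<dots> = R" using R unfolding r_def by simp
  finally have LR: "length ys = R" using L by simp
  have "gpath c (U + (k-1)*U) (S @ ys)" using gpath_app[OF S[unfolded upath_gpath] G] .
  moreover have "U + (k-1)*U = n" using ndef k3 by (simp add: algebra_simps)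
  ultimately have GP: "gpath c n (S @ ys)" by simp
  have "3 \<le> length (S @ ys)" using LR R k3 by simp
  moreover have "closeadj (last (S @ ys)) (hd (S @ ys))" using GP unfolding gpath_def closeadj_def by simp
  ultimately have "vcyc c (S @ ys)" using GP unfolding vcyc_def gpath_def by simp
  then show ?thesis using LR by auto
qed

lemma p3k: "3*(k-1) = p" using pdef k3 by simp
lemma n2p: "n = (2*p+1)*(k-1) + (2*p+1)"
proof -
  have "k = (k-1) + 1" using k3 by simp
  then have "n = ((k-1)+1)*U" using ndef by simp
  also have "\<dots> = U*(k-1) + U" by (simp add: algebra_simps)
  finally show ?thesis using Udef by simp
qed

lemma con_hp2: "con vs b a \<Longrightarrow> has_pair vs a b" unfolding con_def has_pair_def by blast

lemma around_m:
  assumes c: "c = i*U"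
    and fam: "\<And>c0. clo \<le> c0 \<Longrightarrow> c0 \<le> 2*p+1 \<Longrightarrow> \<exists>S. upath c S \<and> length S = c0 \<and> (con S a b \<or> con S b a)"
    and m: "clo + p \<le> m" "m \<le> n" and clo: "clo \<le> 2*p+1"
  shows "\<exists>vs. vcyc c vs \<and> length vs = m \<and> has_pair vs a b"
proof -
  define T where "T = (2*p+1)*(k-1)"
  have nT: "n = T + (2*p+1)" using n2p unfolding T_def .
  define c0 where "c0 = max clo (m - T)"
  have c0: "clo \<le> c0" "c0 \<le> 2*p+1" using clo m nT unfolding c0_def by auto
  obtain S where S: "upath c S" "length S = c0" "con S a b \<or> con S b a" using fam[OF c0] by blast
  have kk: "3*(k-1) \<le> T" unfolding T_def using p6 by (intro mult_le_mono1) simp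
  have pT: "p \<le> T" using kk p3k by simp
  have R0: "p \<le> m - c0" "m - c0 \<le> T" using m c0 pT unfolding c0_def by auto
  have R: "3*(k-1) \<le> m - c0" "m - c0 \<le> (2*p+1)*(k-1)" using R0 p3k unfolding T_def by auto
  obtain ys where ys: "vcyc c (S @ ys)" "length (S @ ys) = length S + (m - c0)" using around[OF c S(1) R] by blast
  have "length (S @ ys) = m" using ys(2) S(2) R0 c0 p6 by auto
  moreover have "has_pair (S @ ys) a b"
  proof (cases "con S a b")
    case True then show ?thesis by (intro con_hp con_app2)
  next
    case False then have "con S b a" using S(3) by blast
    then show ?thesis by (intro con_hp2 con_app2)
  qed
  ultimately show ?thesis using ys(1) by blast
qed

definition goodc where "goodc c a b \<longleftrightarrow> (\<forall>m. 3 \<le> m \<and> m \<le> n \<longrightarrow> (\<exists>vs. vcyc c vs \<and> length vs = m \<and> has_pair vs a b))"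


lemma E1:
  assumes c: "c = i*U" and x0: "x0 + 2 \<le> p"
  shows "goodc c (c+x0) (c+x0+1)"
  unfolding goodc_def
proof (intro allI impI)
  fix m assume m: "3 \<le> m \<and> m \<le> n"
  consider "m \<le> p+2" | "p+3 \<le> m" "m \<le> 2*p+2" | "2*p+3 \<le> m" by linarith
  then show "\<exists>vs. vcyc c vs \<and> length vs = m \<and> has_pair vs (c+x0) (c+x0+1)"
  proof cases
    case 1
    define a where "a = min x0 (p+2-m)"
    have ab: "a < a+m-2" "a+m-2 \<le> p" using m 1 unfolding a_def by auto
    have a1: "c + a \<le> c + x0" unfolding a_def by simp
    have a2: "Suc (c+x0) < c+(a+m-2)+1" using m 1 x0 unfolding a_def by auto
    have "con [c+a..<c+(a+m-2)+1] (c+x0) (Suc (c+x0))" by (rule con_upt[OF a1 a2])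
    then have "con (fan c a (a+m-2)) (c+x0) (c+x0+1)" unfolding fan_def by (simp add: con_Cons)
    then have h: "has_pair (fan c a (a+m-2)) (c+x0) (c+x0+1)" by (rule con_hp)
    have v: "vcyc c (fan c a (a+m-2))" by (rule fan_ok(1)[OF c ab])
    have l: "length (fan c a (a+m-2)) = m" using fan_ok(2)[OF c ab] ab m by simp
    show ?thesis using h v l by blast
  next
    case 2
    have w: "m-p-3 < p" using 2 by simp
    have "con (L3 c 0 (m-p-3)) (c+x0) (c+x0+1)" using L3_upt x0 by simp
    then have h: "has_pair (L3 c 0 (m-p-3)) (c+x0) (c+x0+1)" by (rule con_hp)
    have p0: "0 < p" using p6 by simp
    have v: "vcyc c (L3 c 0 (m-p-3))" by (rule L3_ok(1)[OF c p0 w])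
    have l: "length (L3 c 0 (m-p-3)) = m" using L3_ok(2)[OF c p0 w] 2 by simp
    show ?thesis using h v l by blast
  next
    case 3
    show ?thesis
    proof (rule around_m[OF c _ _ _ _, of "p+2"])
      fix c0 assume c0: "p+2 \<le> c0" "c0 \<le> 2*p+1"
      have h: "1 \<le> p" "p \<le> p" "c0 - p - 2 < p" using c0 p6 by auto
      have "con [c..<c+p] (c+x0) (Suc (c+x0))" by (rule con_upt) (use x0 in auto)
      then have "con (S1 c p p (c0-p-2)) (c+x0) (c+x0+1)" unfolding S1_def by (simp add: con_app2)
      moreover have "upath c (S1 c p p (c0-p-2))" by (rule S1_ok(1)[OF c h(1) h(2) h(2) h(3)])
      moreover have "length (S1 c p p (c0-p-2)) = c0" using S1_ok(2)[OF c h(1) h(2) h(2) h(3)] c0 by simp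
      ultimately show "\<exists>S. upath c S \<and> length S = c0 \<and> (con S (c+x0) (c+x0+1) \<or> con S (c+x0+1) (c+x0))"
        by blast
    qed (use 3 m p6 in auto)
  qed
qed

lemma E2:
  assumes c: "c = i*U"
  shows "goodc c (c+(p-1)) (c+p)"
  unfolding goodc_def
proof (intro allI impI)
  fix m assume m: "3 \<le> m \<and> m \<le> n"
  then have m3: "3 \<le> m" "m \<le> n" by auto
  have pp: "Suc (c+(p-1)) = c+p" "c+(p-1)+1 = c+p" using p6 by auto
  consider "m \<le> p+2" | "p+3 \<le> m" "m \<le> 2*p+2" | "2*p+3 \<le> m" by linarith
  then show "\<exists>vs. vcyc c vs \<and> length vs = m \<and> has_pair vs (c+(p-1)) (c+p)"
  proof cases
    case 1
    have ab: "p+2-m < p" "p \<le> p" using m3 1 by auto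
    have a1: "c + (p+2-m) \<le> c + (p-1)" using m3 by simp
    have a2: "Suc (c+(p-1)) < c+p+1" using p6 by simp
    have "con [c+(p+2-m)..<c+p+1] (c+(p-1)) (Suc (c+(p-1)))" by (rule con_upt[OF a1 a2])
    then have "con (fan c (p+2-m) p) (c+(p-1)) (c+p)" unfolding fan_def using pp by (simp add: con_Cons)
    then have h: "has_pair (fan c (p+2-m) p) (c+(p-1)) (c+p)" by (rule con_hp)
    have v: "vcyc c (fan c (p+2-m) p)" by (rule fan_ok(1)[OF c ab])
    have l: "length (fan c (p+2-m) p) = m" using fan_ok(2)[OF c ab] m3 1 by simp
    show ?thesis using h v l by blast
  next
    case 2
    have w: "m-p-3 < p" using 2 by simp
    have p1: "p - 1 < p" using p6 by simp
    have "con (L3 c 0 (m-p-3)) (c+(p-1)) (c+p)" using L3_upt[OF p1] pp by simp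
    then have h: "has_pair (L3 c 0 (m-p-3)) (c+(p-1)) (c+p)" by (rule con_hp)
    have p0: "0 < p" using p6 by simp
    have v: "vcyc c (L3 c 0 (m-p-3))" by (rule L3_ok(1)[OF c p0 w])
    have l: "length (L3 c 0 (m-p-3)) = m" using L3_ok(2)[OF c p0 w] 2 by simp
    show ?thesis using h v l by blast
  next
    case 3
    show ?thesis
    proof (rule around_m[OF c _ _ _ _, of "p+2"])
      fix c0 assume c0: "p+2 \<le> c0" "c0 \<le> 2*p+1"
      have j: "c0 - p - 1 \<le> p" using c0 by auto
      have a1: "c \<le> c + (p-1)" by simp
      have a2: "Suc (c+(p-1)) < c+p+1" using p6 by simp
      have A: "con [c..<c+p+1] (c+(p-1)) (Suc (c+(p-1)))" by (rule con_upt[OF a1 a2])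
      have B: "con ([c..<c+p+1] @ [c+U-(c0-p-1)..<c+U]) (c+(p-1)) (Suc (c+(p-1)))" by (rule con_app2[OF A])
      then have "con (S2 c (c0-p-1)) (c+(p-1)) (c+p)" unfolding S2_def pp(1) .
      moreover have "upath c (S2 c (c0-p-1))" by (rule S2_ok(1)[OF c j])
      moreover have "length (S2 c (c0-p-1)) = c0" using S2_ok(2)[OF c j] c0 by simp
      ultimately show "\<exists>S. upath c S \<and> length S = c0 \<and> (con S (c+(p-1)) (c+p) \<or> con S (c+p) (c+(p-1)))"
        by blast
    qed (use 3 m p6 in auto)
  qed
qed

lemma E3:
  assumes c: "c = i*U"
  shows "goodc c (c+p) (c+p+1)"
  unfolding goodc_def
proof (intro allI impI)
  fix m assume m: "3 \<le> m \<and> m \<le> n"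
  then have m3: "3 \<le> m" "m \<le> n" by auto
  consider "m \<le> p+2" | "p+3 \<le> m" by linarith
  then show "\<exists>vs. vcyc c vs \<and> length vs = m \<and> has_pair vs (c+p) (c+p+1)"
  proof cases
    case 1
    have ab: "p+2-m < p" "p \<le> p" using m3 1 by auto
    have "last (fan c (p+2-m) p) = c+p" "hd (fan c (p+2-m) p) = c+p+1" unfolding fan_def using ab by auto
    then have h: "has_pair (fan c (p+2-m) p) (c+p) (c+p+1)" unfolding has_pair_def by blast
    have v: "vcyc c (fan c (p+2-m) p)" by (rule fan_ok(1)[OF c ab])
    have l: "length (fan c (p+2-m) p) = m" using fan_ok(2)[OF c ab] m3 1 by simp
    show ?thesis using h v l by blast
  next
    case 2
    show ?thesis
    proof (rule around_m[OF c _ _ _ _, of 3])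
      fix c0 assume c0: "3 \<le> c0" "c0 \<le> 2*p+1"
      define a where "a = min (c0-2) p"
      have "other c c0 = [c..<c+a] @ (c+p+1) # (c+p) # [c+U-(c0-2-a)..<c+U]"
        unfolding other_def S1_def a_def by simp
      then have "con (other c c0) (c+p+1) (c+p)" unfolding con_def by blast
      moreover have "upath c (other c c0)" by (rule other_ok(1)[OF c c0])
      moreover have "length (other c c0) = c0" by (rule other_ok(2)[OF c c0])
      ultimately show "\<exists>S. upath c S \<and> length S = c0 \<and> (con S (c+p) (c+p+1) \<or> con S (c+p+1) (c+p))"
        by blast
    qed (use 2 m p6 in auto)
  qed
qed

lemma E4:
  assumes c: "c = i*U" and x0: "x0 < p"
  shows "goodc c (c+p+1) (c+x0)"
  unfolding goodc_def
proof (intro allI impI)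
  fix m assume m: "3 \<le> m \<and> m \<le> n"
  then have m3: "3 \<le> m" "m \<le> n" by auto
  consider "m \<le> p-x0+2" | "p-x0+3 \<le> m" "m \<le> 2*p-x0+2" | "2*p-x0+3 \<le> m" by linarith
  then show "\<exists>vs. vcyc c vs \<and> length vs = m \<and> has_pair vs (c+p+1) (c+x0)"
  proof cases
    case 1
    have ab: "x0 < x0+m-2" "x0+m-2 \<le> p" using m3 1 x0 by auto
    have u: "[c+x0..<c+(x0+m-2)+1] = (c+x0) # [Suc (c+x0)..<c+(x0+m-2)+1]"
      by (rule upt_conv_Cons) (use ab in simp)
    have "fan c x0 (x0+m-2) = (c+p+1) # (c+x0) # [Suc (c+x0)..<c+(x0+m-2)+1]"
      unfolding fan_def u by simp
    then have "con (fan c x0 (x0+m-2)) (c+p+1) (c+x0)" by (simp add: con_two)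
    then have h: "has_pair (fan c x0 (x0+m-2)) (c+p+1) (c+x0)" by (rule con_hp)
    have v: "vcyc c (fan c x0 (x0+m-2))" by (rule fan_ok(1)[OF c ab])
    have l: "length (fan c x0 (x0+m-2)) = m" using fan_ok(2)[OF c ab] m3 by simp
    show ?thesis using h v l by blast
  next
    case 2
    have w: "m+x0-p-3 < p" using 2 x0 by simp
    have "con (L3 c x0 (m+x0-p-3)) (c+p+1) (c+x0)" by (rule L3_front[OF x0])
    then have h: "has_pair (L3 c x0 (m+x0-p-3)) (c+p+1) (c+x0)" by (rule con_hp)
    have v: "vcyc c (L3 c x0 (m+x0-p-3))" by (rule L3_ok(1)[OF c x0 w])
    have l: "length (L3 c x0 (m+x0-p-3)) = m" using L3_ok(2)[OF c x0 w] 2 x0 by simp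
    show ?thesis using h v l by blast
  next
    case 3
    define clo where "clo = (if x0 = 0 then p+2 else p-x0+3)"
    show ?thesis
    proof (rule around_m[OF c _ _ _ _, of clo])
      fix c0 assume c0: "clo \<le> c0" "c0 \<le> 2*p+1"
      show "\<exists>S. upath c S \<and> length S = c0 \<and> (con S (c+p+1) (c+x0) \<or> con S (c+x0) (c+p+1))"
      proof (cases "x0 = 0")
        case True
        then have c0': "p+2 \<le> c0" using c0 unfolding clo_def by simp
        have h: "1 \<le> (1::nat)" "1 \<le> (1::nat)" "1 \<le> p" "c0 - p - 2 < p" using c0' c0 p6 by auto
        have "S1 c 1 1 (c0-p-2) = [] @ c # (c+p+1) # ([c+1..<c+p+1] @ [c+U-(c0-p-2)..<c+U])"
          unfolding S1_def by simp
        then have "con (S1 c 1 1 (c0-p-2)) (c+x0) (c+p+1)" unfolding con_def using True by auto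
        moreover have "upath c (S1 c 1 1 (c0-p-2))" by (rule S1_ok(1)[OF c h])
        moreover have "length (S1 c 1 1 (c0-p-2)) = c0" using S1_ok(2)[OF c h] c0' by simp
        ultimately show ?thesis by blast
      next
        case False
        then have c0': "p-x0+3 \<le> c0" using c0 unfolding clo_def by simp
        show ?thesis
        proof (cases "c0 \<le> 2*p-x0+2")
          case True
          have h: "1 \<le> (1::nat)" "1 \<le> x0" "x0 \<le> p" "c0+x0-p-3 < p" using c0' True False x0 by auto
          have "S1 c 1 x0 (c0+x0-p-3) = [c] @ (c+p+1) # (c+x0) # ([Suc (c+x0)..<c+p+1] @ [c+U-(c0+x0-p-3)..<c+U])"
            unfolding S1_def using x0 by (simp add: upt_conv_Cons)
          then have "con (S1 c 1 x0 (c0+x0-p-3)) (c+p+1) (c+x0)" unfolding con_def by blast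
          moreover have "upath c (S1 c 1 x0 (c0+x0-p-3))" by (rule S1_ok(1)[OF c h])
          moreover have "length (S1 c 1 x0 (c0+x0-p-3)) = c0" using S1_ok(2)[OF c h] c0' x0 by simp
          ultimately show ?thesis by blast
        next
          case False
          have h: "1 \<le> x0+1" "x0+1 \<le> x0+1" "x0+1 \<le> p" "c0-p-2 < p" using c0 False x0 by auto
          have "[c..<c+(x0+1)] = [c..<c+x0] @ [c+x0]" by simp
          then have "S1 c (x0+1) (x0+1) (c0-p-2) = [c..<c+x0] @ (c+x0) # (c+p+1) # ([c+(x0+1)..<c+p+1] @ [c+U-(c0-p-2)..<c+U])"
            unfolding S1_def by simp
          then have "con (S1 c (x0+1) (x0+1) (c0-p-2)) (c+x0) (c+p+1)" unfolding con_def by blast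
          moreover have "upath c (S1 c (x0+1) (x0+1) (c0-p-2))" by (rule S1_ok(1)[OF c h])
          moreover have "length (S1 c (x0+1) (x0+1) (c0-p-2)) = c0" using S1_ok(2)[OF c h] c0 False x0 by simp
          ultimately show ?thesis by blast
        qed
      qed
    qed (use 3 m3 p6 x0 in \<open>auto simp: clo_def\<close>)
  qed
qed

definition edge_ok where "edge_ok e \<longleftrightarrow> (\<forall>m. 3 \<le> m \<and> m \<le> n \<longrightarrow>
   (\<exists>cc. is_cycle {..<n} EE cc \<and> length cc = m \<and> e \<in> cycle_edges cc))"

lemma vcyc_final:
  assumes "vcyc w vs" "has_pair vs a b" "length vs = m"
  shows "\<exists>cc. is_cycle {..<n} EE cc \<and> length cc = m \<and> {a mod n, b mod n} \<in> cycle_edges cc"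
proof -
  have "vs \<noteq> []" using assms(1) unfolding vcyc_def by auto
  then show ?thesis using vcyc_cycle[OF assms(1)] has_pair_edge[OF assms(2)] assms(3)
    by (intro exI[of _ "map (\<lambda>x. x mod n) vs"]) simp
qed

lemma goodc_edge: "goodc c a b \<Longrightarrow> edge_ok {a mod n, b mod n}"
  unfolding goodc_def edge_ok_def using vcyc_final by blast

lemma goodc_refl_edge:
  assumes g: "goodc c a b" and c: "c = i*U"
  shows "edge_ok {(2*c+U+2*n - a) mod n, (2*c+U+2*n - b) mod n}"
  unfolding edge_ok_def
proof (intro allI impI)
  fix m assume m: "3 \<le> m \<and> m \<le> n"
  define M where "M = 2*c+U+2*n"
  obtain vs where vs: "vcyc c vs" "length vs = m" "has_pair vs a b" using g m unfolding goodc_def by blast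
  have MU: "M mod U = 0"
  proof -
    have "M = (2*i + 1 + 2*k)*U" unfolding M_def c ndef by (simp add: algebra_simps)
    then show ?thesis by simp
  qed
  have bd: "\<forall>x\<in>set vs. x + n \<le> M" using vs(1) unfolding vcyc_def M_def by auto
  have r: "vcyc (M + 1 - c - n) (map (\<lambda>x. M - x) vs) \<and> has_pair (map (\<lambda>x. M - x) vs) (M - a) (M - b)"
    by (rule vcyc_refl[OF vs(1) vs(3) MU bd])
  then show "\<exists>cc. is_cycle {..<n} EE cc \<and> length cc = m \<and> {(2*c+U+2*n - a) mod n, (2*c+U+2*n - b) mod n} \<in> cycle_edges cc"
    using vcyc_final[of _ "map (\<lambda>x. M - x) vs" "M - a" "M - b" m] vs(2) unfolding M_def by auto
qed

lemma divU: assumes "x < n" shows "x div U < k" "x = (x div U)*U + x mod U" "x mod U < U"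
proof -
  show "x div U < k" using assms ndef Upos by (simp add: less_mult_imp_div_less)
  show "x = (x div U)*U + x mod U" by simp
  show "x mod U < U" using Upos by simp
qed

lemma Er_ok: assumes "x < n" shows "edge_ok {x, Suc x mod n}"
proof -
  define i where "i = x div U"
  define r where "r = x mod U"
  define c where "c = i*U"
  have xc: "x = c + r" unfolding c_def i_def r_def by simp
  have rU: "r < U" unfolding r_def using Upos by simp
  have ik: "i < k" unfolding i_def using divU assms by simp
  have cn: "c + U \<le> n" unfolding c_def ndef using ik by (metis Suc_leI mult_Suc mult_le_mono1 add.commute)
  have xn: "x mod n = x" using assms by simp
  have c: "c = i*U" by (simp add: c_def)
  consider "r + 2 \<le> p" | "r = p - 1" | "r = p" | "r = p + 1" | "p + 2 \<le> r" "r \<le> 2*p" using rU Udef p6 by linarith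
  then show ?thesis
  proof cases
    case 1
    have "edge_ok {(c+r) mod n, (c+r+1) mod n}" by (rule goodc_edge[OF E1[OF c 1]])
    then show ?thesis using xc xn by simp
  next
    case 2
    have "edge_ok {(c+(p-1)) mod n, (c+p) mod n}" by (rule goodc_edge[OF E2[OF c]])
    moreover have "c + (p-1) = x" "c + p = Suc x" using xc 2 p6 by auto
    ultimately show ?thesis using xn by simp
  next
    case 3
    have "edge_ok {(c+p) mod n, (c+p+1) mod n}" by (rule goodc_edge[OF E3[OF c]])
    then show ?thesis using xc xn 3 by simp
  next
    case 4
    have e: "2*c+U+2*n - (c+(p-1)) = Suc x + 2*n" "2*c+U+2*n - (c+p) = x + 2*n"
      using xc 4 Udef p6 by auto
    have "edge_ok {(2*c+U+2*n - (c+(p-1))) mod n, (2*c+U+2*n - (c+p)) mod n}"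
      by (rule goodc_refl_edge[OF E2[OF c] c])
    then have "edge_ok {(Suc x + 2*n) mod n, (x + 2*n) mod n}" unfolding e .
    then show ?thesis using xn by (simp add: insert_commute)
  next
    case 5
    have x0: "(2*p - r) + 2 \<le> p" using 5 by simp
    have e: "2*c+U+2*n - (c+(2*p-r)) = Suc x + 2*n" "2*c+U+2*n - (c+(2*p-r)+1) = x + 2*n"
      using xc 5 Udef by auto
    have "edge_ok {(2*c+U+2*n - (c+(2*p-r))) mod n, (2*c+U+2*n - (c+(2*p-r)+1)) mod n}"
      by (rule goodc_refl_edge[OF E1[OF c x0] c])
    then have "edge_ok {(Suc x + 2*n) mod n, (x + 2*n) mod n}" unfolding e .
    then show ?thesis using xn by (simp add: insert_commute)
  qed
qed

lemma EA_ok: assumes "i < k" "j < p" shows "edge_ok {i*U+p+1, i*U+j}"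
proof -
  have cn: "i*U + U \<le> n" unfolding ndef using assms(1) by (metis Suc_leI mult_Suc mult_le_mono1 add.commute)
  have "edge_ok {(i*U+p+1) mod n, (i*U+j) mod n}" by (rule goodc_edge[OF E4[OF refl assms(2)]])
  moreover have "(i*U+p+1) mod n = i*U+p+1" "(i*U+j) mod n = i*U+j" using cn Udef assms(2) by auto
  ultimately show ?thesis by simp
qed

lemma EB_ok: assumes "i < k" "j < p" shows "edge_ok {i*U+p, (i*U+p+2+j) mod n}"
proof -
  let ?c = "i*U"
  have cn: "i*U + U \<le> n" unfolding ndef using assms(1) by (metis Suc_leI mult_Suc mult_le_mono1 add.commute)
  have x0: "p - 1 - j < p" using p6 by simp
  have e: "2*?c+U+2*n - (?c+p+1) = ?c + p + 2*n" "2*?c+U+2*n - (?c+(p-1-j)) = ?c+p+2+j + 2*n"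
    using Udef assms(2) by auto
  have "edge_ok {(2*?c+U+2*n - (?c+p+1)) mod n, (2*?c+U+2*n - (?c+(p-1-j))) mod n}"
    by (rule goodc_refl_edge[OF E4[OF refl x0] refl])
  moreover have m2: "(?c + p + 2*n) mod n = ?c + p" "(?c+p+2+j + 2*n) mod n = (?c+p+2+j) mod n"
    using cn Udef by (simp_all only: mod_mult_self1) simp
  ultimately show ?thesis unfolding e m2 by blast
qed

lemma all_edges: "e \<in> EE \<Longrightarrow> edge_ok e"
  unfolding EE_def Er_def EA_def EB_def using Er_ok EA_ok EB_ok by auto

lemma modn_modU: "(x mod n) mod U = x mod U"
proof -
  have "U dvd n" using ndef by simp
  then show ?thesis by (rule mod_mod_cancel)
qed

lemma resU: "r < U \<Longrightarrow> (i*U + r) mod U = r" by simp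

lemma tB: assumes "j < p" shows "(p+2+j) mod U \<noteq> p" "(p+2+j) mod U \<noteq> p+1" "(p+2+j) mod U \<noteq> Suc p"
   "(p+2+j) mod U = 0 \<or> (p+2 \<le> (p+2+j) mod U \<and> (p+2+j) mod U \<le> 2*p)"
proof -
  have "(p+2+j) mod U = 0 \<or> ((p+2+j) mod U = p+2+j \<and> p+2+j \<le> 2*p)"
  proof (cases "j = p - 1")
    case True then have "p+2+j = U" using Udef p6 by simp
    then show ?thesis by simp
  next
    case False then have "p+2+j < U" "p+2+j \<le> 2*p" using Udef assms by auto
    then show ?thesis by simp
  qed
  then show "(p+2+j) mod U \<noteq> p" "(p+2+j) mod U \<noteq> p+1" "(p+2+j) mod U \<noteq> Suc p"
     "(p+2+j) mod U = 0 \<or> (p+2 \<le> (p+2+j) mod U \<and> (p+2+j) mod U \<le> 2*p)" using assms p6 by auto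
qed

lemma sucU: "Suc x mod U = (if Suc (x mod U) = U then 0 else Suc (x mod U))"
  by (simp add: mod_Suc)

lemma Er_res: "(\<lambda>y. y mod U) ` {x, Suc x mod n} = {x mod U, Suc x mod U}"
  using modn_modU by simp

lemma EA_res: "j < p \<Longrightarrow> (\<lambda>y. y mod U) ` {i*U+p+1, i*U+j} = {p+1, j}"
proof -
  assume j: "j < p"
  have eq: "i*U+p+1 = i*U + (p+1)" by simp
  have "(i*U+p+1) mod U = p+1" unfolding eq by (rule resU) (use Udef p6 in simp)
  moreover have "(i*U+j) mod U = j" using resU[of j i] Udef j by simp
  ultimately show ?thesis by simp
qed

lemma EB_res: "(\<lambda>y. y mod U) ` {i*U+p, (i*U+p+2+j) mod n} = {p, (p+2+j) mod U}"
proof -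
  have "(i*U+p) mod U = p" using resU[of p i] Udef by simp
  moreover have "((i*U+p+2+j) mod n) mod U = (p+2+j) mod U"
  proof -
    have eq: "i*U+p+2+j = (p+2+j) + i*U" by simp
    have "(i*U+p+2+j) mod U = (p+2+j) mod U" unfolding eq by (rule mod_mult_self1)
    then show ?thesis using modn_modU by simp
  qed
  ultimately show ?thesis by simp
qed

lemma Er_EA: "Er \<inter> EA = {}"
proof (rule ccontr)
  assume "Er \<inter> EA \<noteq> {}"
  then obtain x i j where x: "x < n" and ij: "j < p" and e: "{x, Suc x mod n} = {i*U+p+1, i*U+j}"
    unfolding Er_def EA_def by auto
  have "(\<lambda>y. y mod U) ` {x, Suc x mod n} = (\<lambda>y. y mod U) ` {i*U+p+1, i*U+j}" using e by simp
  then have "{x mod U, Suc x mod U} = {p+1, j}" unfolding Er_res EA_res[OF ij] .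
  moreover have "x mod U < U" using Upos by simp
  ultimately show False using ij Udef p6 sucU[of x] by (auto simp: doubleton_eq_iff split: if_splits)
qed

lemma Er_EB: "Er \<inter> EB = {}"
proof (rule ccontr)
  assume "Er \<inter> EB \<noteq> {}"
  then obtain x i j where x: "x < n" and ij: "j < p" and e: "{x, Suc x mod n} = {i*U+p, (i*U+p+2+j) mod n}"
    unfolding Er_def EB_def by auto
  have "(\<lambda>y. y mod U) ` {x, Suc x mod n} = (\<lambda>y. y mod U) ` {i*U+p, (i*U+p+2+j) mod n}" using e by simp
  then have "{x mod U, Suc x mod U} = {p, (p+2+j) mod U}" unfolding Er_res EB_res .
  moreover have "x mod U < U" using Upos by simp
  ultimately show False using tB[OF ij] Udef p6 sucU[of x] by (auto simp: doubleton_eq_iff split: if_splits)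
qed

lemma EA_EB: "EA \<inter> EB = {}"
proof (rule ccontr)
  assume "EA \<inter> EB \<noteq> {}"
  then obtain i j i' j' where ij: "j < p" "j' < p" and e: "{i*U+p+1, i*U+j} = {i'*U+p, (i'*U+p+2+j') mod n}"
    unfolding EA_def EB_def by auto
  have "(\<lambda>y. y mod U) ` {i*U+p+1, i*U+j} = (\<lambda>y. y mod U) ` {i'*U+p, (i'*U+p+2+j') mod n}" using e by simp
  then have "{p+1, j} = {p, (p+2+j') mod U}" unfolding EA_res[OF ij(1)] EB_res .
  then show False using tB[OF ij(2)] ij by (auto simp: doubleton_eq_iff)
qed

lemma SS_ne: assumes "x < n" shows "Suc (Suc x mod n) mod n \<noteq> x"
proof -
  have e: "Suc (Suc x mod n) mod n = Suc (Suc x) mod n" by (simp add: mod_Suc_eq)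
  show ?thesis
  proof (cases "Suc (Suc x) < n")
    case True then show ?thesis using e by simp
  next
    case False
    then have "Suc (Suc x) - n < n" "n \<le> Suc (Suc x)" using assms nU Upos by auto
    then have "Suc (Suc x) mod n = Suc (Suc x) - n" by (simp add: mod_if)
    then show ?thesis using e nU Upos by auto
  qed
qed

lemma card_Er: "card Er = n"
proof -
  have "inj_on (\<lambda>x. {x, Suc x mod n}) {..<n}"
  proof (rule inj_onI)
    fix x y assume x: "x \<in> {..<n}" and y: "y \<in> {..<n}" and e: "{x, Suc x mod n} = {y, Suc y mod n}"
    show "x = y"
    proof (rule ccontr)
      assume "x \<noteq> y"
      then have "x = Suc y mod n" "Suc x mod n = y" using e by (auto simp: doubleton_eq_iff)
      then have "Suc (Suc y mod n) mod n = y" by simp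
      then show False using SS_ne y by simp
    qed
  qed
  then show ?thesis unfolding Er_def by (simp add: card_image)
qed

lemma resD: "r < U \<Longrightarrow> (i*U + r) div U = i" by simp

lemma card_EA: "card EA = k*p"
proof -
  have "inj_on (\<lambda>(i,j). {i*U+p+1, i*U+j}) ({..<k} \<times> {..<p})"
  proof (rule inj_onI, clarify)
    fix i j i' j' assume ij: "j < p" "j' < p" and e: "{i*U+p+1, i*U+j} = {i'*U+p+1, i'*U+j'}"
    have pU: "p+1 < U" "j < U" "j' < U" using Udef ij by auto
    have r1: "(i*U+p+1) mod U = p+1" "(i'*U+p+1) mod U = p+1" "(i*U+p+1) div U = i" "(i'*U+p+1) div U = i'"
      using resU[OF pU(1)] resD[OF pU(1)] by (simp_all add: add.assoc)
    have r2: "(i*U+j) mod U = j" "(i'*U+j') mod U = j'" "(i*U+j) div U = i" "(i'*U+j') div U = i'"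
      using resU[OF pU(2)] resU[OF pU(3)] resD[OF pU(2)] resD[OF pU(3)] by simp_all
    from e consider "i*U+p+1 = i'*U+p+1" "i*U+j = i'*U+j'" | "i*U+p+1 = i'*U+j'" "i*U+j = i'*U+p+1"
      by (auto simp: doubleton_eq_iff)
    then show "i = i' \<and> j = j'"
    proof cases
      case 1
      then have "i = i'" using r1 by metis
      then show ?thesis using 1 by simp
    next
      case 2 then have "p+1 = j'" using r1 r2 by metis
      then show ?thesis using ij by simp
    qed
  qed
  then show ?thesis unfolding EA_def by (simp add: card_image card_cartesian_product)
qed

lemma card_EB: "card EB = k*p"
proof -
  have "inj_on (\<lambda>(i,j). {i*U+p, (i*U+p+2+j) mod n}) ({..<k} \<times> {..<p})"
  proof (rule inj_onI, clarify)
    fix i j i' j' assume ik: "i < k" "i' < k" and ij: "j < p" "j' < p"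
      and e: "{i*U+p, (i*U+p+2+j) mod n} = {i'*U+p, (i'*U+p+2+j') mod n}"
    have pU: "p < U" using Udef by simp
    have r1: "(i*U+p) mod U = p" "(i*U+p) div U = i" "(i'*U+p) div U = i'"
      using resU[OF pU] resD[OF pU] by simp_all
    have img: "(\<lambda>y. y mod U) ` {i'*U+p, (i'*U+p+2+j') mod n} = {p, (p+2+j') mod U}" by (rule EB_res)
    from e consider "i*U+p = i'*U+p" "(i*U+p+2+j) mod n = (i'*U+p+2+j') mod n"
      | "i*U+p = (i'*U+p+2+j') mod n"
      by (auto simp: doubleton_eq_iff)
    then show "i = i' \<and> j = j'"
    proof cases
      case 1
      then have ii: "i = i'" using r1 by metis
      have w: "i*U+p+2+j \<in> {1..<1+n}" "i*U+p+2+j' \<in> {1..<1+n}"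
      proof -
        have "i*U + U \<le> n" unfolding ndef using ik(1) by (metis Suc_leI mult_Suc mult_le_mono1 add.commute)
        then show "i*U+p+2+j \<in> {1..<1+n}" "i*U+p+2+j' \<in> {1..<1+n}" using ij Udef by auto
      qed
      have "i*U+p+2+j = i*U+p+2+j'" using inj_window[of 1] w 1(2) ii unfolding inj_on_def by blast
      then show ?thesis using ii by simp
    next
      case 2
      have "((i'*U+p+2+j') mod n) mod U = (p+2+j') mod U"
      proof -
        have "(\<lambda>y. y mod U) ` {i'*U+p, (i'*U+p+2+j') mod n} = {p, (p+2+j') mod U}" by (rule EB_res)
        have eq: "i'*U+p+2+j' = (p+2+j') + i'*U" by simp
        have "(i'*U+p+2+j') mod U = (p+2+j') mod U" unfolding eq by (rule mod_mult_self1)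
        then show ?thesis using modn_modU by simp
      qed
      then have "p = (p+2+j') mod U" using 2 r1 by simp
      then show ?thesis using tB[OF ij(2)] by simp
    qed
  qed
  then show ?thesis unfolding EB_def by (simp add: card_image card_cartesian_product)
qed

lemma finite_E: "finite Er" "finite EA" "finite EB" unfolding Er_def EA_def EB_def by auto

lemma card_EE: "card EE = 2*n - k"
proof -
  have "card EE = card Er + card EA + card EB"
    unfolding EE_def using finite_E Er_EA Er_EB EA_EB
    by (simp add: card_Un_disjoint Int_Un_distrib2)
  also have "\<dots> = n + k*p + k*p" using card_Er card_EA card_EB by simp
  also have "\<dots> = 2*n - k" using ndef Udef by (simp add: algebra_simps)
  finally show ?thesis .
qed

lemma simple_aux: "e \<in> EE \<Longrightarrow> e \<subseteq> {..<n} \<and> card e = 2"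
proof -
  assume e: "e \<in> EE"
  then consider x where "x < n" "e = {x, Suc x mod n}" | i j where "i < k" "j < p" "e = {i*U+p+1, i*U+j}"
    | i j where "i < k" "j < p" "e = {i*U+p, (i*U+p+2+j) mod n}"
    unfolding EE_def Er_def EA_def EB_def by auto
  then show "e \<subseteq> {..<n} \<and> card e = 2"
  proof cases
    case (1 x)
    have "x \<noteq> Suc x mod n"
    proof (cases "Suc x < n")
      case True then show ?thesis by simp
    next
      case False then have "Suc x = n" using 1 by simp
      then show ?thesis using nU Upos by auto
    qed
    then show ?thesis using 1 npos by auto
  next
    case (2 i j)
    have "i*U + U \<le> n" unfolding ndef using 2(1) by (metis Suc_leI mult_Suc mult_le_mono1 add.commute)
    then show ?thesis using 2 Udef by auto
  next
    case (3 i j)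
    have cn: "i*U + U \<le> n" unfolding ndef using 3(1) by (metis Suc_leI mult_Suc mult_le_mono1 add.commute)
    have "i*U + p \<noteq> (i*U+p+2+j) mod n"
    proof (cases "i*U+p+2+j < n")
      case True then show ?thesis by simp
    next
      case False then have "i*U+p+2+j = n" using cn 3 Udef by simp
      then show ?thesis using p6 by simp
    qed
    then show ?thesis using 3 cn Udef npos by auto
  qed
qed

lemma simple: "simple_graph {..<n} EE"
  unfolding simple_graph_def using simple_aux by auto

lemma pancyc: "edge_pancyclic {..<n} EE"
  unfolding edge_pancyclic_def using all_edges unfolding edge_ok_def by simp

end

theorem theorem5:
  fixes k :: nat
  assumes "k \<ge> 3"
  shows "\<exists>(V :: nat set) E. simple_graph V E \<and> edge_pancyclic V E \<and>
           card V = 6 * k^2 - 5 * k \<and> card E = 2 * (6 * k^2 - 5 * k) - k"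
proof -
  interpret G k "3*k-3" "2*(3*k-3)+1" "k*(2*(3*k-3)+1)"
    by unfold_locales (use assms in auto)
  have u: "2*(3*k-3)+1 = 6*k-5" using assms by simp
  have nn: "k*(2*(3*k-3)+1) = 6*k^2 - 5*k"
    unfolding u by (simp add: diff_mult_distrib2 power2_eq_square algebra_simps)
  have "card {..<k*(2*(3*k-3)+1)} = 6*k^2 - 5*k" using nn by simp
  moreover have "card EE = 2 * (6 * k^2 - 5 * k) - k" using card_EE nn by simp
  ultimately show ?thesis using simple pancyc by blast
qed

end
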